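(* Let $G$ be a compact group such that $G/Z(G)$ is a $p$-group of order $p^k$, where $p$ is a prime and $k\ge2$ is an integer. Then $d(G)\le \dfrac{p^k+p-1}{p^{k+1}}$, and equality holds if $G$ is isoclinic to an extra-special $p$-group of order $p^{k+1}$.
   Context: For a compact group $G$, $\mu_G$ is its normalized Haar measure and the commutativity degree is $d(G)=(\mu_G\times\mu_G)(\{(x,y)\in G\times G: xy=yx\})$. Two groups $G_1,G_2$ are isoclinic if there are isomorphisms $\alpha:G_1/Z(G_1)\to G_2/Z(G_2)$ and $\beta:G_1'\to G_2'$ (derived subgroups) with $\beta([x,y])=[x',y']$ whenever $x'Z(G_2)=\alpha(xZ(G_1))$ and $y'Z(G_2)=\alpha(yZ(G_1))$; here $[x,y]=x^{-1}y^{-1}xy$ (for a compact $G$ the isomorphisms are taken as isomorphisms of topological groups, finite groups being discrete). *)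

theory Defs
  imports "HOL-Analysis.Analysis" "HOL-Probability.Probability" "HOL-Algebra.Algebra"
begin

definition center :: "('a, 'b) monoid_scheme \<Rightarrow> 'a set" where
  "center G = {z \<in> carrier G. \<forall>x \<in> carrier G. z \<otimes>\<^bsub>G\<^esub> x = x \<otimes>\<^bsub>G\<^esub> z}"

definition commutator :: "('a, 'b) monoid_scheme \<Rightarrow> 'a \<Rightarrow> 'a \<Rightarrow> 'a" where
  "commutator G x y = inv\<^bsub>G\<^esub> x \<otimes>\<^bsub>G\<^esub> inv\<^bsub>G\<^esub> y \<otimes>\<^bsub>G\<^esub> x \<otimes>\<^bsub>G\<^esub> y"

definition compact_group :: "('a, 'b) monoid_scheme \<Rightarrow> 'a topology \<Rightarrow> bool" where
  "compact_group G T \<longleftrightarrow> group G \<and> topspace T = carrier G \<and> compact_space T \<and>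
     Hausdorff_space T \<and>
     continuous_map (prod_topology T T) T (\<lambda>(x, y). x \<otimes>\<^bsub>G\<^esub> y) \<and>
     continuous_map T T (\<lambda>x. inv\<^bsub>G\<^esub> x)"

definition borel_of_top :: "'a topology \<Rightarrow> 'a measure" where
  "borel_of_top T = sigma (topspace T) {U. openin T U}"

definition haar_measure :: "('a, 'b) monoid_scheme \<Rightarrow> 'a topology \<Rightarrow> 'a measure \<Rightarrow> bool" where
  "haar_measure G T M \<longleftrightarrow>
     space M = topspace T \<and> sets M = sets (borel_of_top T) \<and> prob_space M \<and>
     (\<forall>g \<in> carrier G. \<forall>A \<in> sets M. measure M ((\<lambda>x. g \<otimes>\<^bsub>G\<^esub> x) ` A) = measure M A) \<and>
     (\<forall>A \<in> sets M. measure M A = (INF U \<in> {U. openin T U \<and> A \<subseteq> U}. measure M U)) \<and>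
     (\<forall>A \<in> sets M. measure M A = (SUP K \<in> {K. compactin T K \<and> K \<subseteq> A}. measure M K))"

text \<open>Commutativity degree of G, computed with the normalized Haar measure \<nu> of G \<times> G
  (which is the product mu_G \<times> mu_G).\<close>
definition comm_degree :: "('a, 'b) monoid_scheme \<Rightarrow> ('a \<times> 'a) measure \<Rightarrow> real" where
  "comm_degree G \<nu> = measure \<nu> {(x, y) \<in> carrier G \<times> carrier G. x \<otimes>\<^bsub>G\<^esub> y = y \<otimes>\<^bsub>G\<^esub> x}"

definition isoclinic :: "('a, 'b) monoid_scheme \<Rightarrow> ('c, 'd) monoid_scheme \<Rightarrow> bool" where
  "isoclinic G H \<longleftrightarrow>
     (\<exists>\<alpha> \<beta>. \<alpha> \<in> iso (G Mod center G) (H Mod center H) \<and>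
       \<beta> \<in> iso (G\<lparr>carrier := derived G (carrier G)\<rparr>) (H\<lparr>carrier := derived H (carrier H)\<rparr>) \<and>
       (\<forall>x \<in> carrier G. \<forall>y \<in> carrier G. \<forall>x' \<in> carrier H. \<forall>y' \<in> carrier H.
          \<alpha> (center G #>\<^bsub>G\<^esub> x) = center H #>\<^bsub>H\<^esub> x' \<and>
          \<alpha> (center G #>\<^bsub>G\<^esub> y) = center H #>\<^bsub>H\<^esub> y' \<longrightarrow>
          \<beta> (commutator G x y) = commutator H x' y'))"

text \<open>Extra-special p-group: finite p-group P with Z(P) = P' of order p and P/Z(P)
  elementary abelian (so Z(P) = P' = Frattini(P)).\<close>
definition extraspecial :: "nat \<Rightarrow> ('a, 'b) monoid_scheme \<Rightarrow> bool" where
  "extraspecial p P \<longleftrightarrow> group P \<and> Factorial_Ring.prime p \<and> finite (carrier P) \<and>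
     (\<exists>n. order P = p ^ n) \<and>
     center P = derived P (carrier P) \<and> card (center P) = p \<and>
     (\<forall>x \<in> carrier P. x [^]\<^bsub>P\<^esub> p \<in> center P)"

end

theory Submission imports Defs begin

definition CP :: "('a, 'b) monoid_scheme \<Rightarrow> ('a set \<times> 'a set) set" where
  "CP G = {(C, D). C \<in> rcosets\<^bsub>G\<^esub> (center G) \<and> D \<in> rcosets\<^bsub>G\<^esub> (center G) \<and>
              (\<forall>x\<in>C. \<forall>y\<in>D. x \<otimes>\<^bsub>G\<^esub> y = y \<otimes>\<^bsub>G\<^esub> x)}"

definition SC :: "('a, 'b) monoid_scheme \<Rightarrow> 'a set \<Rightarrow> 'a set set" where
  "SC G C = {D \<in> rcosets\<^bsub>G\<^esub> (center G). \<forall>x\<in>C. \<forall>y\<in>D. x \<otimes>\<^bsub>G\<^esub> y = y \<otimes>\<^bsub>G\<^esub> x}"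

definition cent :: "('a, 'b) monoid_scheme \<Rightarrow> 'a \<Rightarrow> 'a set" where
  "cent G x = {y \<in> carrier G. x \<otimes>\<^bsub>G\<^esub> y = y \<otimes>\<^bsub>G\<^esub> x}"


context group
begin

lemma center_sub: "center G \<subseteq> carrier G" by (auto simp: center_def)

lemma center_comm: "z \<in> center G \<Longrightarrow> y \<in> carrier G \<Longrightarrow> z \<otimes> y = y \<otimes> z"
  by (auto simp: center_def)

lemma center_subgroup: "subgroup (center G) G"
proof
  show "center G \<subseteq> carrier G" by (rule center_sub)
  show "\<one> \<in> center G" by (auto simp: center_def)
  fix x y assume x: "x \<in> center G" and y: "y \<in> center G"
  have xc: "x \<in> carrier G" and yc: "y \<in> carrier G" using x y center_sub by auto
  show "x \<otimes> y \<in> center G"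
    unfolding center_def
  proof (safe)
    show "x \<otimes> y \<in> carrier G" using xc yc by simp
    fix g assume g: "g \<in> carrier G"
    have "x \<otimes> y \<otimes> g = x \<otimes> (y \<otimes> g)" using xc yc g by (simp add: m_assoc)
    also have "\<dots> = x \<otimes> (g \<otimes> y)" using center_comm[OF y g] by simp
    also have "\<dots> = (x \<otimes> g) \<otimes> y" using xc yc g by (simp add: m_assoc)
    also have "\<dots> = (g \<otimes> x) \<otimes> y" using center_comm[OF x g] by simp
    also have "\<dots> = g \<otimes> (x \<otimes> y)" using xc yc g by (simp add: m_assoc)
    finally show "x \<otimes> y \<otimes> g = g \<otimes> (x \<otimes> y)" .
  qed
next
  fix x assume x: "x \<in> center G"
  have xc: "x \<in> carrier G" using x center_sub by auto
  show "inv x \<in> center G"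
    unfolding center_def
  proof (safe)
    show "inv x \<in> carrier G" using xc by simp
    fix y assume y: "y \<in> carrier G"
    have xy: "x \<otimes> y = y \<otimes> x" using center_comm[OF x y] .
    have "inv x \<otimes> y = inv x \<otimes> (y \<otimes> x) \<otimes> inv x" using xc y by (simp add: m_assoc)
    also have "\<dots> = inv x \<otimes> (x \<otimes> y) \<otimes> inv x" using xy by simp
    also have "\<dots> = y \<otimes> inv x" using xc y by (simp add: m_assoc [symmetric])
    finally show "inv x \<otimes> y = y \<otimes> inv x" .
  qed
qed

lemma center_normal: "center G \<lhd> G"
proof (rule normalI[OF center_subgroup], intro ballI)
  fix x assume x: "x \<in> carrier G"
  show "center G #> x = x <# center G"
  proof (intro equalityI subsetI)
    fix u assume "u \<in> center G #> x"
    then obtain h where h: "h \<in> center G" "u = h \<otimes> x" by (auto simp: r_coset_def)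
    have "u = x \<otimes> h" using h center_comm[OF h(1) x] by simp
    then show "u \<in> x <# center G" unfolding l_coset_def using h(1) by blast
  next
    fix u assume "u \<in> x <# center G"
    then obtain h where h: "h \<in> center G" "u = x \<otimes> h" by (auto simp: l_coset_def)
    have "u = h \<otimes> x" using h center_comm[OF h(1) x] by simp
    then show "u \<in> center G #> x" unfolding r_coset_def using h(1) by blast
  qed
qed

lemma comm_welldef:
  assumes a: "a \<in> carrier G" and b: "b \<in> carrier G"
    and x: "x \<in> center G #> a" and y: "y \<in> center G #> b"
  shows "(x \<otimes> y = y \<otimes> x) \<longleftrightarrow> (a \<otimes> b = b \<otimes> a)"
proof -
  obtain z where z: "z \<in> center G" "x = z \<otimes> a" using x by (auto simp: r_coset_def)
  obtain w where w: "w \<in> center G" "y = w \<otimes> b" using y by (auto simp: r_coset_def)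
  have zc: "z \<in> carrier G" "w \<in> carrier G" using z w center_sub by auto
  have e1: "x \<otimes> y = (z \<otimes> w) \<otimes> (a \<otimes> b)"
  proof -
    have "x \<otimes> y = z \<otimes> ((a \<otimes> w) \<otimes> b)" using z w zc a b by (simp add: m_assoc)
    also have "\<dots> = z \<otimes> ((w \<otimes> a) \<otimes> b)" using center_comm[OF w(1) a] by simp
    also have "\<dots> = (z \<otimes> w) \<otimes> (a \<otimes> b)" using zc a b by (simp add: m_assoc)
    finally show ?thesis .
  qed
  have e2: "y \<otimes> x = (z \<otimes> w) \<otimes> (b \<otimes> a)"
  proof -
    have "y \<otimes> x = w \<otimes> ((b \<otimes> z) \<otimes> a)" using z w zc a b by (simp add: m_assoc)
    also have "\<dots> = w \<otimes> ((z \<otimes> b) \<otimes> a)" using center_comm[OF z(1) b] by simp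
    also have "\<dots> = (w \<otimes> z) \<otimes> (b \<otimes> a)" using zc a b by (simp add: m_assoc)
    also have "\<dots> = (z \<otimes> w) \<otimes> (b \<otimes> a)" using center_comm[OF z(1) zc(2)] by simp
    finally show ?thesis .
  qed
  have c: "z \<otimes> w \<in> carrier G" "a \<otimes> b \<in> carrier G" "b \<otimes> a \<in> carrier G" using zc a b by auto
  show ?thesis unfolding e1 e2 using Units_l_cancel[of "z \<otimes> w" "a \<otimes> b" "b \<otimes> a"] c Units_eq by blast
qed

lemma commutator_one:
  assumes x: "x \<in> carrier G" and y: "y \<in> carrier G"
  shows "commutator G x y = \<one> \<longleftrightarrow> x \<otimes> y = y \<otimes> x"
proof -
  have "commutator G x y = inv (y \<otimes> x) \<otimes> (x \<otimes> y)"
    unfolding commutator_def using x y by (simp add: inv_mult_group m_assoc)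
  also have "\<dots> = \<one> \<longleftrightarrow> x \<otimes> y = y \<otimes> x"
  proof
    assume h: "inv (y \<otimes> x) \<otimes> (x \<otimes> y) = \<one>"
    have "x \<otimes> y = (y \<otimes> x) \<otimes> (inv (y \<otimes> x) \<otimes> (x \<otimes> y))" using x y by (simp add: m_assoc[symmetric])
    then show "x \<otimes> y = y \<otimes> x" using h x y by simp
  next
    assume "x \<otimes> y = y \<otimes> x" then show "inv (y \<otimes> x) \<otimes> (x \<otimes> y) = \<one>" using x y by simp
  qed
  finally show ?thesis .
qed

lemma commutator_closed:
  "x \<in> carrier G \<Longrightarrow> y \<in> carrier G \<Longrightarrow> commutator G x y \<in> carrier G"
  by (simp add: commutator_def)

lemma commutator_derived:
  assumes x: "x \<in> carrier G" and y: "y \<in> carrier G"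
  shows "commutator G x y \<in> derived G (carrier G)"
proof -
  have "commutator G x y \<in> derived_set G (carrier G)"
  proof -
    have "commutator G x y = inv x \<otimes> inv y \<otimes> inv (inv x) \<otimes> inv (inv y)"
      using x y by (simp add: commutator_def)
    moreover have "inv x \<in> carrier G" "inv y \<in> carrier G" using x y by auto
    ultimately show ?thesis by blast
  qed
  then show ?thesis unfolding derived_def by (rule generate.incl)
qed

lemma cent_subgroup:
  assumes x: "x \<in> carrier G" shows "subgroup (cent G x) G"
proof
  show "cent G x \<subseteq> carrier G" by (auto simp: cent_def)
  show "\<one> \<in> cent G x" using x by (auto simp: cent_def)
  fix a b assume a: "a \<in> cent G x" and b: "b \<in> cent G x"
  have ac: "a \<in> carrier G" "x \<otimes> a = a \<otimes> x" and bc: "b \<in> carrier G" "x \<otimes> b = b \<otimes> x"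
    using a b by (auto simp: cent_def)
  have "x \<otimes> (a \<otimes> b) = (x \<otimes> a) \<otimes> b" using x ac(1) bc(1) by (simp add: m_assoc)
  also have "\<dots> = (a \<otimes> x) \<otimes> b" using ac by simp
  also have "\<dots> = a \<otimes> (x \<otimes> b)" using x ac(1) bc(1) by (simp add: m_assoc)
  also have "\<dots> = a \<otimes> (b \<otimes> x)" using bc by simp
  also have "\<dots> = (a \<otimes> b) \<otimes> x" using x ac(1) bc(1) by (simp add: m_assoc)
  finally show "a \<otimes> b \<in> cent G x" using ac bc by (simp add: cent_def)
next
  fix a assume a: "a \<in> cent G x"
  have ac: "a \<in> carrier G" "x \<otimes> a = a \<otimes> x" using a by (auto simp: cent_def)
  have "x \<otimes> inv a = inv a \<otimes> (a \<otimes> x) \<otimes> inv a" using x ac(1) by (simp add: m_assoc[symmetric])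
  also have "\<dots> = inv a \<otimes> (x \<otimes> a) \<otimes> inv a" using ac by simp
  also have "\<dots> = inv a \<otimes> x" using x ac(1) by (simp add: m_assoc)
  finally show "inv a \<in> cent G x" using ac by (simp add: cent_def)
qed

lemma SC_center: "SC G (center G) = rcosets (center G)"
proof -
  have "\<And>D x y. D \<in> rcosets (center G) \<Longrightarrow> x \<in> center G \<Longrightarrow> y \<in> D \<Longrightarrow> x \<otimes> y = y \<otimes> x"
    using center_comm subgroup.rcosets_carrier[OF center_subgroup is_group] by blast
  then show ?thesis unfolding SC_def by blast
qed

lemma SC_img:
  assumes x: "x \<in> carrier G"
  shows "SC G (center G #> x) = (\<lambda>a. center G #> a) ` cent G x"
proof (intro equalityI subsetI)
  fix D assume D: "D \<in> SC G (center G #> x)"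
  then obtain b where b: "b \<in> carrier G" "D = center G #> b"
    unfolding SC_def RCOSETS_def by blast
  have "b \<in> D" using b rcos_self[OF b(1) center_subgroup] by simp
  moreover have "x \<in> center G #> x" using rcos_self[OF x center_subgroup] .
  ultimately have "x \<otimes> b = b \<otimes> x" using D unfolding SC_def by blast
  then have "b \<in> cent G x" using b by (simp add: cent_def)
  then show "D \<in> (\<lambda>a. center G #> a) ` cent G x" using b by blast
next
  fix D assume "D \<in> (\<lambda>a. center G #> a) ` cent G x"
  then obtain b where b: "b \<in> cent G x" "D = center G #> b" by blast
  have bc: "b \<in> carrier G" "x \<otimes> b = b \<otimes> x" using b by (auto simp: cent_def)
  have "D \<in> rcosets (center G)" using b bc rcosetsI[OF center_sub] by simp
  moreover have "\<forall>u\<in>center G #> x. \<forall>v\<in>D. u \<otimes> v = v \<otimes> u"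
    using comm_welldef[OF x bc(1)] bc b by blast
  ultimately show "D \<in> SC G (center G #> x)" unfolding SC_def by blast
qed

lemma SC_bound:
  assumes p: "Factorial_Ring.prime (p::nat)" and N: "card (rcosets (center G)) = p ^ k"
    and x: "x \<in> carrier G" and xZ: "x \<notin> center G"
  shows "card (SC G (center G #> x)) \<le> p ^ (k - 1)"
proof -
  interpret N: normal "center G" G by (rule center_normal)
  let ?Q = "G Mod center G"
  have Qg: "group ?Q" by (rule N.factorgroup_is_group)
  have hom: "group_hom G ?Q (\<lambda>a. center G #> a)"
    using N.r_coset_hom_Mod Qg by (simp add: group_hom_def group_hom_axioms_def is_group)
  let ?S = "(\<lambda>a. center G #> a) ` cent G x"
  have sub: "subgroup ?S ?Q"
    using group_hom.subgroup_img_is_subgroup[OF hom cent_subgroup[OF x]] .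
  have ordQ: "order ?Q = p ^ k" using N by (simp add: order_def FactGroup_def)
  have "card (rcosets\<^bsub>?Q\<^esub> ?S) * card ?S = p ^ k"
    using group.lagrange[OF Qg sub] ordQ by simp
  then have dvd: "card ?S dvd p ^ k" by (metis dvd_triv_right)
  then obtain j where j: "j \<le> k" "card ?S = p ^ j" using divides_primepow[OF p dvd] by auto
  have pg: "p > 1" using p prime_gt_1_nat by blast
  have cQ: "card (carrier ?Q) = p ^ k" using N by (simp add: FactGroup_def)
  have fin: "finite (carrier ?Q)" using pg cQ by (intro card_ge_0_finite) simp
  obtain g where g: "g \<in> carrier G" "x \<otimes> g \<noteq> g \<otimes> x" using x xZ unfolding center_def by blast
  have "center G #> g \<notin> ?S"
  proof
    assume "center G #> g \<in> ?S"
    then obtain b where b: "b \<in> cent G x" "center G #> g = center G #> b" by blast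
    have bc: "b \<in> carrier G" "x \<otimes> b = b \<otimes> x" using b by (auto simp: cent_def)
    have "g \<in> center G #> b" using b(2) rcos_self[OF g(1) center_subgroup] by simp
    then have "x \<otimes> g = g \<otimes> x \<longleftrightarrow> x \<otimes> b = b \<otimes> x"
      using comm_welldef[OF x bc(1) rcos_self[OF x center_subgroup]] by blast
    then show False using g bc by simp
  qed
  moreover have "center G #> g \<in> carrier ?Q" using g by (simp add: FactGroup_def rcosetsI[OF center_sub])
  moreover have "?S \<subseteq> carrier ?Q" using subgroup.subset[OF sub] .
  ultimately have "?S \<subset> carrier ?Q" by blast
  then have "card ?S < card (carrier ?Q)" by (rule psubset_card_mono[OF fin])
  also have "\<dots> = p ^ k" using N by (simp add: FactGroup_def)
  finally have "p ^ j < p ^ k" using j by simp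
  then have "j < k" using pg by (simp add: power_strict_increasing_iff)
  then have "p ^ j \<le> p ^ (k - 1)" using pg by (intro power_increasing) auto
  then show ?thesis using j SC_img[OF x] by simp
qed

lemma CP_count:
  assumes fin: "finite (rcosets (center G))"
  shows "card (CP G) = card (rcosets (center G)) + (\<Sum>C\<in>rcosets (center G) - {center G}. card (SC G C))"
proof -
  have eq: "CP G = Sigma (rcosets (center G)) (SC G)" unfolding CP_def SC_def by auto
  have Zin: "center G \<in> rcosets (center G)" using subgroup.subgroup_in_rcosets[OF center_subgroup is_group] .
  have finS: "\<forall>C\<in>rcosets (center G). finite (SC G C)"
    using fin unfolding SC_def by auto
  have "card (CP G) = (\<Sum>C\<in>rcosets (center G). card (SC G C))"
    unfolding eq using fin finS by simp
  also have "\<dots> = card (SC G (center G)) + (\<Sum>C\<in>rcosets (center G) - {center G}. card (SC G C))"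
    using fin Zin by (simp add: sum.remove)
  finally show ?thesis using SC_center by simp
qed

lemma rcosets_noncentral:
  assumes "C \<in> rcosets (center G)" "C \<noteq> center G"
  obtains x where "x \<in> carrier G" "x \<notin> center G" "C = center G #> x"
proof -
  obtain x where x: "x \<in> carrier G" "C = center G #> x" using assms(1) unfolding RCOSETS_def by blast
  have "x \<notin> center G" using coset_join2[OF x(1) center_subgroup] x assms(2) by blast
  then show ?thesis using x that by blast
qed

lemma CP_le:
  assumes p: "Factorial_Ring.prime (p::nat)" and N: "card (rcosets (center G)) = p ^ k"
  shows "card (CP G) \<le> p ^ k + (p ^ k - 1) * p ^ (k - 1)"
proof -
  have pg: "p > 0" using p prime_gt_0_nat by blast
  have fin: "finite (rcosets (center G))" using N pg by (intro card_ge_0_finite) simp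
  have Zin: "center G \<in> rcosets (center G)" using subgroup.subgroup_in_rcosets[OF center_subgroup is_group] .
  have "(\<Sum>C\<in>rcosets (center G) - {center G}. card (SC G C)) \<le> (\<Sum>C\<in>rcosets (center G) - {center G}. p ^ (k - 1))"
  proof (rule sum_mono)
    fix C assume "C \<in> rcosets (center G) - {center G}"
    then obtain x where "x \<in> carrier G" "x \<notin> center G" "C = center G #> x"
      using rcosets_noncentral by blast
    then show "card (SC G C) \<le> p ^ (k - 1)" using SC_bound[OF p N] by simp
  qed
  also have "\<dots> = (p ^ k - 1) * p ^ (k - 1)" using fin Zin N by (simp add: card_Diff_singleton)
  finally show ?thesis using CP_count[OF fin] N by simp
qed

lemma CP_eq:
  assumes p: "Factorial_Ring.prime (p::nat)" and N: "card (rcosets (center G)) = p ^ k"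
    and ge: "\<And>x. x \<in> carrier G \<Longrightarrow> x \<notin> center G \<Longrightarrow> card (SC G (center G #> x)) \<ge> p ^ (k - 1)"
  shows "card (CP G) = p ^ k + (p ^ k - 1) * p ^ (k - 1)"
proof -
  have pg: "p > 0" using p prime_gt_0_nat by blast
  have fin: "finite (rcosets (center G))" using N pg by (intro card_ge_0_finite) simp
  have Zin: "center G \<in> rcosets (center G)" using subgroup.subgroup_in_rcosets[OF center_subgroup is_group] .
  have "(\<Sum>C\<in>rcosets (center G) - {center G}. card (SC G C)) = (\<Sum>C\<in>rcosets (center G) - {center G}. p ^ (k - 1))"
  proof (rule sum.cong[OF refl])
    fix C assume "C \<in> rcosets (center G) - {center G}"
    then obtain x where "x \<in> carrier G" "x \<notin> center G" "C = center G #> x"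
      using rcosets_noncentral by blast
    then show "card (SC G C) = p ^ (k - 1)" using SC_bound[OF p N] ge by (simp add: le_antisym)
  qed
  also have "\<dots> = (p ^ k - 1) * p ^ (k - 1)" using fin Zin N by (simp add: card_Diff_singleton)
  finally show ?thesis using CP_count[OF fin] N by simp
qed

lemma CP_iff:
  assumes a: "a \<in> carrier G" and b: "b \<in> carrier G"
  shows "(center G #> a, center G #> b) \<in> CP G \<longleftrightarrow> a \<otimes> b = b \<otimes> a"
proof
  assume "(center G #> a, center G #> b) \<in> CP G"
  then show "a \<otimes> b = b \<otimes> a" unfolding CP_def
    using rcos_self[OF a center_subgroup] rcos_self[OF b center_subgroup] by blast
next
  assume ab: "a \<otimes> b = b \<otimes> a"
  have "center G #> a \<in> rcosets (center G)" "center G #> b \<in> rcosets (center G)"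
    using a b rcosetsI[OF center_sub] by auto
  moreover have "\<forall>x\<in>center G #> a. \<forall>y\<in>center G #> b. x \<otimes> y = y \<otimes> x"
    using comm_welldef[OF a b] ab by blast
  ultimately show "(center G #> a, center G #> b) \<in> CP G" unfolding CP_def by blast
qed

lemma commutator_alt:
  "x \<in> carrier G \<Longrightarrow> y \<in> carrier G \<Longrightarrow> commutator G x y = inv x \<otimes> (inv y \<otimes> x \<otimes> y)"
  by (simp add: commutator_def m_assoc)

lemma commutator_eq_cent:
  assumes x: "x \<in> carrier G" and y1: "y1 \<in> carrier G" and y2: "y2 \<in> carrier G"
    and e: "commutator G x y1 = commutator G x y2"
  shows "y2 \<otimes> inv y1 \<in> cent G x"
proof -
  have u: "inv y1 \<otimes> x \<otimes> y1 = inv y2 \<otimes> x \<otimes> y2"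
  proof -
    have h: "inv x \<otimes> (inv y1 \<otimes> x \<otimes> y1) = inv x \<otimes> (inv y2 \<otimes> x \<otimes> y2)"
      using e commutator_alt[OF x y1] commutator_alt[OF x y2] by simp
    show ?thesis by (rule l_cancel[OF h]) (use x y1 y2 in auto)
  qed
  have "y2 \<otimes> inv y1 \<otimes> x = y2 \<otimes> (inv y1 \<otimes> x \<otimes> y1) \<otimes> inv y1"
    using x y1 y2 by (simp add: m_assoc)
  also have "\<dots> = y2 \<otimes> (inv y2 \<otimes> x \<otimes> y2) \<otimes> inv y1" using u by simp
  also have "\<dots> = x \<otimes> (y2 \<otimes> inv y1)" using x y1 y2 by (simp add: m_assoc) (simp add: m_assoc[symmetric])
  finally show ?thesis using y1 y2 by (simp add: cent_def)
qed

lemma card_image_factor: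
  assumes fA: "finite A" and "\<And>a b. a \<in> A \<Longrightarrow> b \<in> A \<Longrightarrow> g a = g b \<Longrightarrow> f a = f b"
  shows "card (f ` A) \<le> card (g ` A)"
proof -
  have "f ` A = (\<lambda>v. f (SOME a. a \<in> A \<and> g a = v)) ` (g ` A)"
  proof (intro equalityI subsetI)
    fix u assume "u \<in> f ` A"
    then obtain a where a: "a \<in> A" "u = f a" by blast
    have "\<exists>c. c \<in> A \<and> g c = g a" using a by blast
    then have "(SOME c. c \<in> A \<and> g c = g a) \<in> A \<and> g (SOME c. c \<in> A \<and> g c = g a) = g a" by (rule someI_ex)
    then have "f (SOME c. c \<in> A \<and> g c = g a) = f a" using assms a by blast
    then show "u \<in> (\<lambda>v. f (SOME a. a \<in> A \<and> g a = v)) ` (g ` A)" using a by force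
  next
    fix u assume "u \<in> (\<lambda>v. f (SOME a. a \<in> A \<and> g a = v)) ` (g ` A)"
    then obtain a where a: "a \<in> A" "u = f (SOME c. c \<in> A \<and> g c = g a)" by blast
    have "\<exists>c. c \<in> A \<and> g c = g a" using a by blast
    then have "(SOME c. c \<in> A \<and> g c = g a) \<in> A" by (metis (mono_tags, lifting) someI_ex)
    then show "u \<in> f ` A" using a by blast
  qed
  then show ?thesis using card_image_le[OF finite_imageI[OF fA]] by simp
qed

lemma SC_lower:
  assumes fin: "finite (carrier G)" and p: "Factorial_Ring.prime (p::nat)"
    and Zd: "center G = derived G (carrier G)" and cZ: "card (center G) = p"
    and ord: "order G = p ^ (k + 1)" and k: "k \<ge> 1"
    and x: "x \<in> carrier G"
  shows "card (SC G (center G #> x)) \<ge> p ^ (k - 1)"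
proof -
  let ?K = "cent G x"
  have Ksub: "subgroup ?K G" by (rule cent_subgroup[OF x])
  have pg: "p > 0" using p prime_gt_0_nat by blast
  have r: "rcosets ?K = (\<lambda>y. ?K #> y) ` carrier G" unfolding RCOSETS_def by blast
  have "card (rcosets ?K) \<le> card ((\<lambda>y. commutator G x y) ` carrier G)"
    unfolding r
  proof (rule card_image_factor[OF fin])
    fix a b assume a: "a \<in> carrier G" and b: "b \<in> carrier G"
      and e: "commutator G x a = commutator G x b"
    have "b \<otimes> inv a \<in> ?K" by (rule commutator_eq_cent[OF x a b e])
    then have "b \<in> ?K #> a" using subgroup.rcos_module_rev[OF Ksub is_group a b] by blast
    then show "?K #> a = ?K #> b" using repr_independence[OF _ a Ksub] by blast
  qed
  also have "\<dots> \<le> card (center G)"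
  proof (rule card_mono)
    show "finite (center G)" using fin center_sub finite_subset by blast
    show "(\<lambda>y. commutator G x y) ` carrier G \<subseteq> center G" using Zd commutator_derived x by auto
  qed
  finally have cr: "card (rcosets ?K) \<le> p" using cZ by simp
  have lag: "card (rcosets ?K) * card ?K = p ^ (k + 1)" using lagrange[OF Ksub] ord by simp
  have "p * p ^ k \<le> p * card ?K"
  proof -
    have "p * p ^ k = card (rcosets ?K) * card ?K" using lag by simp
    also have "\<dots> \<le> p * card ?K" using cr by simp
    finally show ?thesis .
  qed
  then have cK: "p ^ k \<le> card ?K" using pg by simp
  let ?S = "(\<lambda>a. center G #> a) ` ?K"
  have "?K \<subseteq> \<Union> ?S" using rcos_self[OF _ center_subgroup] Ksub subgroup.subset by blast
  moreover have "finite (\<Union> ?S)"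
  proof -
    have "\<Union> ?S \<subseteq> carrier G" using r_coset_subset_G[OF center_sub] subgroup.subset[OF Ksub] by blast
    then show "finite (\<Union> ?S)" using fin finite_subset by blast
  qed
  ultimately have "card ?K \<le> card (\<Union> ?S)" by (simp add: card_mono)
  also have "\<dots> \<le> sum card ?S" by (rule card_Union_le_sum_card)
  also have "\<dots> = sum (\<lambda>_. p) ?S"
  proof (rule sum.cong[OF refl])
    fix D assume "D \<in> ?S"
    then have "D \<in> rcosets (center G)" using rcosetsI[OF center_sub] subgroup.subset[OF Ksub] by blast
    then show "card D = p" using card_rcosets_equal[OF _ center_sub, of D] cZ by simp
  qed
  also have "\<dots> = card ?S * p" by simp
  finally have "p ^ k \<le> card ?S * p" using cK by linarith
  moreover have "p ^ k = p ^ (k - 1) * p" using k by (cases k) auto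
  ultimately have "p ^ (k - 1) \<le> card ?S" using pg by simp
  then show ?thesis using SC_img[OF x] by simp
qed

end

lemma iso_CP:
  assumes G: "group G" and H: "group H" and iso: "isoclinic G H"
  shows "card (CP G) = card (CP H) \<and> card (rcosets\<^bsub>G\<^esub> (center G)) = card (rcosets\<^bsub>H\<^esub> (center H))"
proof -
  interpret G: group G by (rule G)
  interpret H: group H by (rule H)
  obtain al be where al: "al \<in> iso (G Mod center G) (H Mod center H)"
    and be: "be \<in> iso (G\<lparr>carrier := derived G (carrier G)\<rparr>) (H\<lparr>carrier := derived H (carrier H)\<rparr>)"
    and rel: "\<And>x y x' y'. x \<in> carrier G \<Longrightarrow> y \<in> carrier G \<Longrightarrow> x' \<in> carrier H \<Longrightarrow> y' \<in> carrier H \<Longrightarrow>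
          al (center G #>\<^bsub>G\<^esub> x) = center H #>\<^bsub>H\<^esub> x' \<Longrightarrow>
          al (center G #>\<^bsub>G\<^esub> y) = center H #>\<^bsub>H\<^esub> y' \<Longrightarrow>
          be (commutator G x y) = commutator H x' y'"
    using iso unfolding isoclinic_def by blast
  let ?RG = "rcosets\<^bsub>G\<^esub> (center G)" and ?RH = "rcosets\<^bsub>H\<^esub> (center H)"
  have bij: "bij_betw al ?RG ?RH" using al by (simp add: iso_def FactGroup_def)
  have bbij: "bij_betw be (derived G (carrier G)) (derived H (carrier H))" using be by (simp add: iso_def)
  have bhom: "be \<in> hom (G\<lparr>carrier := derived G (carrier G)\<rparr>) (H\<lparr>carrier := derived H (carrier H)\<rparr>)"
    using be by (simp add: iso_def)
  have gG: "group (G\<lparr>carrier := derived G (carrier G)\<rparr>)"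
    using subgroup.subgroup_is_group[OF G.derived_is_subgroup G] by simp
  have gH: "group (H\<lparr>carrier := derived H (carrier H)\<rparr>)"
    using subgroup.subgroup_is_group[OF H.derived_is_subgroup H] by simp
  have b1: "be \<one>\<^bsub>G\<^esub> = \<one>\<^bsub>H\<^esub>"
    using group_hom.hom_one[of "G\<lparr>carrier := derived G (carrier G)\<rparr>" "H\<lparr>carrier := derived H (carrier H)\<rparr>" be]
      gG gH bhom by (simp add: group_hom_def group_hom_axioms_def)
  have one_der: "\<one>\<^bsub>G\<^esub> \<in> derived G (carrier G)"
    using subgroup.one_closed[OF G.derived_is_subgroup] by simp
  have key: "a \<otimes>\<^bsub>G\<^esub> b = b \<otimes>\<^bsub>G\<^esub> a \<longleftrightarrow> a' \<otimes>\<^bsub>H\<^esub> b' = b' \<otimes>\<^bsub>H\<^esub> a'"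
    if a: "a \<in> carrier G" and b: "b \<in> carrier G" and a': "a' \<in> carrier H" and b': "b' \<in> carrier H"
      and ea: "al (center G #>\<^bsub>G\<^esub> a) = center H #>\<^bsub>H\<^esub> a'"
      and eb: "al (center G #>\<^bsub>G\<^esub> b) = center H #>\<^bsub>H\<^esub> b'" for a b a' b'
  proof -
    have c: "commutator G a b \<in> derived G (carrier G)" by (rule G.commutator_derived[OF a b])
    have "a \<otimes>\<^bsub>G\<^esub> b = b \<otimes>\<^bsub>G\<^esub> a \<longleftrightarrow> commutator G a b = \<one>\<^bsub>G\<^esub>"
      using G.commutator_one[OF a b] by simp
    also have "\<dots> \<longleftrightarrow> be (commutator G a b) = be \<one>\<^bsub>G\<^esub>"
      using bij_betw_imp_inj_on[OF bbij] c one_der by (auto dest: inj_onD)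
    also have "\<dots> \<longleftrightarrow> commutator H a' b' = \<one>\<^bsub>H\<^esub>" using rel[OF a b a' b' ea eb] b1 by simp
    also have "\<dots> \<longleftrightarrow> a' \<otimes>\<^bsub>H\<^esub> b' = b' \<otimes>\<^bsub>H\<^esub> a'" using H.commutator_one[OF a' b'] .
    finally show ?thesis .
  qed
  have repG: "\<exists>a\<in>carrier G. C = center G #>\<^bsub>G\<^esub> a" if "C \<in> ?RG" for C
    using that unfolding RCOSETS_def by blast
  have repH: "\<exists>a\<in>carrier H. C = center H #>\<^bsub>H\<^esub> a" if "C \<in> ?RH" for C
    using that unfolding RCOSETS_def by blast
  have alin: "al C \<in> ?RH" if "C \<in> ?RG" for C by (rule bij_betw_apply[OF bij that])
  let ?F = "\<lambda>(C, D). (al C, al D)"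
  have cpG: "CP G \<subseteq> ?RG \<times> ?RG" unfolding CP_def by auto
  have cpH: "CP H \<subseteq> ?RH \<times> ?RH" unfolding CP_def by auto
  have iff: "(C, D) \<in> CP G \<longleftrightarrow> (al C, al D) \<in> CP H" if C: "C \<in> ?RG" and D: "D \<in> ?RG" for C D
  proof -
    obtain a where a: "a \<in> carrier G" "C = center G #>\<^bsub>G\<^esub> a" using repG[OF C] by blast
    obtain b where b: "b \<in> carrier G" "D = center G #>\<^bsub>G\<^esub> b" using repG[OF D] by blast
    obtain a' where a': "a' \<in> carrier H" "al C = center H #>\<^bsub>H\<^esub> a'" using repH[OF alin[OF C]] by blast
    obtain b' where b': "b' \<in> carrier H" "al D = center H #>\<^bsub>H\<^esub> b'" using repH[OF alin[OF D]] by blast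
    have k: "a \<otimes>\<^bsub>G\<^esub> b = b \<otimes>\<^bsub>G\<^esub> a \<longleftrightarrow> a' \<otimes>\<^bsub>H\<^esub> b' = b' \<otimes>\<^bsub>H\<^esub> a'"
      using key[OF a(1) b(1) a'(1) b'(1)] a(2) b(2) a'(2) b'(2) by blast
    have k1: "(C, D) \<in> CP G \<longleftrightarrow> a \<otimes>\<^bsub>G\<^esub> b = b \<otimes>\<^bsub>G\<^esub> a"
      using G.CP_iff[OF a(1) b(1)] a(2) b(2) by simp
    have k2: "(al C, al D) \<in> CP H \<longleftrightarrow> a' \<otimes>\<^bsub>H\<^esub> b' = b' \<otimes>\<^bsub>H\<^esub> a'"
      using H.CP_iff[OF a'(1) b'(1)] a'(2) b'(2) by simp
    show ?thesis using k k1 k2 by blast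
  qed
  have inj: "inj_on ?F (CP G)"
  proof (rule inj_onI)
    fix u v assume u: "u \<in> CP G" and v: "v \<in> CP G" and e: "?F u = ?F v"
    obtain C D where uu: "u = (C, D)" by (cases u)
    obtain C' D' where vv: "v = (C', D')" by (cases v)
    have "C \<in> ?RG" "D \<in> ?RG" "C' \<in> ?RG" "D' \<in> ?RG" using u v cpG uu vv by auto
    then show "u = v" using e uu vv bij_betw_imp_inj_on[OF bij] by (auto dest: inj_onD)
  qed
  have img: "?F ` CP G = CP H"
  proof (intro equalityI subsetI)
    fix w assume "w \<in> ?F ` CP G"
    then obtain C D where w: "w = (al C, al D)" "(C, D) \<in> CP G" by auto
    then show "w \<in> CP H" using iff cpG by auto
  next
    fix w assume w: "w \<in> CP H"
    obtain C' D' where ww: "w = (C', D')" by (cases w)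
    have im: "al ` ?RG = ?RH" using bij by (simp add: bij_betw_def)
    have "C' \<in> ?RH" "D' \<in> ?RH" using w ww cpH by auto
    then have "C' \<in> al ` ?RG" "D' \<in> al ` ?RG" using im by simp_all
    then obtain C D where C: "C \<in> ?RG" and D: "D \<in> ?RG" and CD: "C' = al C" "D' = al D"
      by blast
    have "(C, D) \<in> CP G" using iff[OF C D] w ww CD by simp
    moreover have "w = ?F (C, D)" using ww CD by simp
    ultimately show "w \<in> ?F ` CP G" by blast
  qed
  have "card (CP G) = card (CP H)" using card_image[OF inj] img by simp
  moreover have "card ?RG = card ?RH" using bij_betw_same_card[OF bij] .
  ultimately show ?thesis by simp
qed


lemma closed_in_borel:
  assumes "closedin TT A" shows "A \<in> sets (borel_of_top TT)"
proof -
  have sub: "{U. openin TT U} \<subseteq> Pow (topspace TT)" using openin_subset by auto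
  have o: "openin TT (topspace TT - A)" and Ssub: "A \<subseteq> topspace TT" using assms by (auto simp: closedin_def)
  have "topspace TT - A \<in> sigma_sets (topspace TT) {U. openin TT U}" using o by (auto intro: sigma_sets.Basic)
  then have "topspace TT - (topspace TT - A) \<in> sigma_sets (topspace TT) {U. openin TT U}"
    by (rule sigma_sets.Compl)
  moreover have "topspace TT - (topspace TT - A) = A" using Ssub by auto
  ultimately show ?thesis unfolding borel_of_top_def using sets_measure_of[OF sub] by simp
qed

context group
begin

lemma center_lcos: "x \<in> carrier G \<Longrightarrow> x <# center G = center G #> x"
  using center_normal normal.coset_eq by (metis)

lemma measure_part:
  assumes cg: "compact_group G T" and hm: "haar_measure (G \<times>\<times> G) (prod_topology T T) \<nu>"
    and fin: "finite (rcosets (center G))"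
  shows "comm_degree G \<nu> = real (card (CP G)) / real (card (rcosets (center G))) ^ 2"
proof -
  let ?Z = "center G" and ?R = "rcosets (center G)"
  have top: "topspace T = carrier G" and Haus: "Hausdorff_space T"
    and cm: "continuous_map (prod_topology T T) T (\<lambda>(x, y). x \<otimes> y)"
    using cg unfolding compact_group_def by auto
  have spn: "space \<nu> = carrier G \<times> carrier G" and setsn: "sets \<nu> = sets (borel_of_top (prod_topology T T))"
    and ps: "prob_space \<nu>"
    and inv: "\<And>g A. g \<in> carrier (G \<times>\<times> G) \<Longrightarrow> A \<in> sets \<nu> \<Longrightarrow> measure \<nu> ((\<lambda>x. g \<otimes>\<^bsub>G \<times>\<times> G\<^esub> x) ` A) = measure \<nu> A"
    using hm top unfolding haar_measure_def by auto
  have rmul: "continuous_map T T (\<lambda>z. z \<otimes> c)" if c: "c \<in> carrier G" for c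
  proof -
    have "continuous_map T (prod_topology T T) (\<lambda>z. (id z, c))"
      by (rule continuous_map_pairedI) (use c top in auto)
    from continuous_map_compose[OF this cm] show ?thesis by (simp add: o_def)
  qed
  have lmul: "continuous_map T T (\<lambda>z. c \<otimes> z)" if c: "c \<in> carrier G" for c
  proof -
    have "continuous_map T (prod_topology T T) (\<lambda>z. (c, id z))"
      by (rule continuous_map_pairedI) (use c top in auto)
    from continuous_map_compose[OF this cm] show ?thesis by (simp add: o_def)
  qed
  have Zclosed: "closedin T ?Z"
  proof -
    have "?Z = \<Inter> ((\<lambda>x. {z \<in> topspace T. z \<otimes> x = x \<otimes> z}) ` carrier G)"
      using top unfolding center_def by auto
    moreover have "closedin T (\<Inter> ((\<lambda>x. {z \<in> topspace T. z \<otimes> x = x \<otimes> z}) ` carrier G))"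
    proof (rule closedin_Inter)
      show "(\<lambda>x. {z \<in> topspace T. z \<otimes> x = x \<otimes> z}) ` carrier G \<noteq> {}" by auto
      fix S assume "S \<in> (\<lambda>x. {z \<in> topspace T. z \<otimes> x = x \<otimes> z}) ` carrier G"
      then obtain x where x: "x \<in> carrier G" "S = {z \<in> topspace T. z \<otimes> x = x \<otimes> z}" by blast
      show "closedin T S" unfolding x(2) by (rule closedin_continuous_maps_eq[OF Haus rmul[OF x(1)] lmul[OF x(1)]])
    qed
    ultimately show ?thesis by simp
  qed
  have cosclosed: "closedin T C" if C: "C \<in> ?R" for C
  proof -
    obtain a where a: "a \<in> carrier G" "C = ?Z #> a" using C unfolding RCOSETS_def by blast
    have "C = {y \<in> topspace T. y \<otimes> inv a \<in> ?Z}"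
      using a subgroup.rcos_module[OF center_subgroup is_group a(1)] r_coset_subset_G[OF center_sub a(1)] top
      by auto
    moreover have "closedin T {y \<in> topspace T. y \<otimes> inv a \<in> ?Z}"
      by (rule closedin_continuous_map_preimage[OF rmul Zclosed]) (use a in simp)
    ultimately show ?thesis by simp
  qed
  have meas: "C \<times> D \<in> sets \<nu>" if "C \<in> ?R" "D \<in> ?R" for C D
    unfolding setsn by (rule closed_in_borel) (simp add: closedin_prod_Times_iff cosclosed that)
  have Zin: "?Z \<in> ?R" using subgroup.subgroup_in_rcosets[OF center_subgroup is_group] .
  define m0 where "m0 = measure \<nu> (?Z \<times> ?Z)"
  have same: "measure \<nu> (C \<times> D) = m0" if C: "C \<in> ?R" and D: "D \<in> ?R" for C D
  proof -
    obtain a where a: "a \<in> carrier G" "C = ?Z #> a" using C unfolding RCOSETS_def by blast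
    obtain b where b: "b \<in> carrier G" "D = ?Z #> b" using D unfolding RCOSETS_def by blast
    have "(\<lambda>x. (a, b) \<otimes>\<^bsub>G \<times>\<times> G\<^esub> x) ` (?Z \<times> ?Z) = (a <# ?Z) \<times> (b <# ?Z)"
      unfolding l_coset_def by (force simp: mult_DirProd')
    also have "\<dots> = C \<times> D" using a b center_lcos by simp
    finally have im: "(\<lambda>x. (a, b) \<otimes>\<^bsub>G \<times>\<times> G\<^esub> x) ` (?Z \<times> ?Z) = C \<times> D" .
    have "measure \<nu> ((\<lambda>x. (a, b) \<otimes>\<^bsub>G \<times>\<times> G\<^esub> x) ` (?Z \<times> ?Z)) = measure \<nu> (?Z \<times> ?Z)"
      using inv[of "(a, b)" "?Z \<times> ?Z"] a b meas[OF Zin Zin] by simp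
    then show ?thesis using im m0_def by simp
  qed
  have disj: "disjoint_family_on (\<lambda>(C, D). C \<times> D) S" if "S \<subseteq> ?R \<times> ?R" for S
  proof (unfold disjoint_family_on_def, intro ballI impI)
    fix u v assume u: "u \<in> S" and v: "v \<in> S" and ne: "u \<noteq> v"
    obtain C D where uu: "u = (C, D)" by (cases u)
    obtain C' D' where vv: "v = (C', D')" by (cases v)
    have in4: "C \<in> ?R" "D \<in> ?R" "C' \<in> ?R" "D' \<in> ?R" using u v that uu vv by auto
    have "C \<noteq> C' \<or> D \<noteq> D'" using ne uu vv by auto
    then have "C \<inter> C' = {} \<or> D \<inter> D' = {}"
      using rcos_disjoint[OF center_subgroup] in4 unfolding pairwise_def disjnt_def by blast
    then show "(case u of (C, D) \<Rightarrow> C \<times> D) \<inter> (case v of (C, D) \<Rightarrow> C \<times> D) = {}" using uu vv by auto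
  qed
  have fin_meas: "emeasure \<nu> A \<noteq> \<infinity>" for A
    using ps prob_space.emeasure_le_1[OF ps, of A] by (auto simp: top_unique)
  have sumU: "measure \<nu> (\<Union>i\<in>S. (\<lambda>(C, D). C \<times> D) i) = real (card S) * m0" if S: "S \<subseteq> ?R \<times> ?R" for S
  proof -
    have finS: "finite S" using S fin finite_subset by blast
    have "measure \<nu> (\<Union>i\<in>S. (\<lambda>(C, D). C \<times> D) i) = (\<Sum>i\<in>S. measure \<nu> ((\<lambda>(C, D). C \<times> D) i))"
      by (rule measure_finite_Union[OF finS _ disj[OF S] fin_meas]) (use S meas in auto)
    also have "\<dots> = (\<Sum>i\<in>S. m0)" using S same by (intro sum.cong) auto
    finally show ?thesis by simp
  qed
  have allU: "(\<Union>i\<in>?R \<times> ?R. (\<lambda>(C, D). C \<times> D) i) = carrier G \<times> carrier G"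
  proof -
    have "(\<Union>i\<in>?R \<times> ?R. (\<lambda>(C, D). C \<times> D) i) = (\<Union>?R) \<times> (\<Union>?R)" by blast
    then show ?thesis using rcosets_part_G[OF center_subgroup] by simp
  qed
  have "1 = measure \<nu> (space \<nu>)" using prob_space.prob_space[OF ps] by simp
  also have "\<dots> = real (card (?R \<times> ?R)) * m0" using sumU[of "?R \<times> ?R"] allU spn by simp
  finally have one: "real (card ?R) ^ 2 * m0 = 1" by (simp add: card_cartesian_product power2_eq_square)
  have cpU: "{(x, y) \<in> carrier G \<times> carrier G. x \<otimes> y = y \<otimes> x} = (\<Union>i\<in>CP G. (\<lambda>(C, D). C \<times> D) i)"
  proof (intro equalityI subsetI)
    fix w assume w: "w \<in> {(x, y) \<in> carrier G \<times> carrier G. x \<otimes> y = y \<otimes> x}"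
    obtain x y where xy: "w = (x, y)" by (cases w)
    have x: "x \<in> carrier G" and y: "y \<in> carrier G" and c: "x \<otimes> y = y \<otimes> x" using w xy by auto
    have "(?Z #> x, ?Z #> y) \<in> CP G" using CP_iff[OF x y] c by simp
    moreover have "w \<in> (?Z #> x) \<times> (?Z #> y)"
      using xy rcos_self[OF x center_subgroup] rcos_self[OF y center_subgroup] by simp
    ultimately show "w \<in> (\<Union>i\<in>CP G. (\<lambda>(C, D). C \<times> D) i)" by force
  next
    fix w assume "w \<in> (\<Union>i\<in>CP G. (\<lambda>(C, D). C \<times> D) i)"
    then obtain C D where CD: "(C, D) \<in> CP G" "w \<in> C \<times> D" by auto
    have "C \<in> ?R" "D \<in> ?R" using CD unfolding CP_def by auto
    then have "C \<subseteq> carrier G" "D \<subseteq> carrier G"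
      using subgroup.rcosets_carrier[OF center_subgroup is_group] by auto
    then show "w \<in> {(x, y) \<in> carrier G \<times> carrier G. x \<otimes> y = y \<otimes> x}"
      using CD unfolding CP_def by auto
  qed
  have cpsub: "CP G \<subseteq> ?R \<times> ?R" unfolding CP_def by auto
  have "comm_degree G \<nu> = real (card (CP G)) * m0"
    unfolding comm_degree_def cpU using sumU[OF cpsub] .
  also have "\<dots> = real (card (CP G)) / real (card ?R) ^ 2"
  proof -
    have "card ?R \<noteq> 0" using fin Zin by auto
    then have "real (card ?R) ^ 2 \<noteq> 0" by simp
    then show ?thesis using one by (simp add: field_simps)
  qed
  finally show ?thesis .
qed

end


lemma arith_id:
  fixes p :: nat and k :: nat
  assumes pg: "p > 0" and k: "k \<ge> 1"
  shows "real (p ^ k + (p ^ k - 1) * p ^ (k - 1)) / (real p ^ k) ^ 2 = (real p ^ k + real p - 1) / real p ^ (k + 1)"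
proof -
  obtain j where j: "k = Suc j" using k by (cases k) auto
  define q where "q = real p"
  define r where "r = q ^ j"
  have q: "q > 0" using pg q_def by simp
  have r: "r > 0" using q r_def by simp
  have ge: "p ^ k \<ge> 1" using pg by simp
  have A: "real (p ^ k + (p ^ k - 1) * p ^ (k - 1)) = q * r + (q * r - 1) * r"
    using ge j by (simp add: q_def r_def of_nat_diff)
  have B: "(real p ^ k) ^ 2 = (q * r) ^ 2" and C: "real p ^ (k + 1) = q ^ 2 * r"
    and D: "real p ^ k = q * r"
    using j by (simp_all add: q_def r_def power2_eq_square)
  have E: "real p = q" by (simp add: q_def)
  show ?thesis
    apply (unfold A B C D)
    apply (unfold E)
    using q r by (simp add: field_simps power2_eq_square)
qed

theorem proposition2p5:
  fixes G :: "('a, 'm) monoid_scheme" and T :: "'a topology"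
    and \<nu> :: "('a \<times> 'a) measure" and H :: "('c, 'n) monoid_scheme"
    and p k :: nat
  assumes "compact_group G T"
    and "Factorial_Ring.prime p" and "k \<ge> 2"
    and "order (G Mod center G) = p ^ k"
    and "haar_measure (G \<times>\<times> G) (prod_topology T T) \<nu>"
  shows "comm_degree G \<nu> \<le> (real p ^ k + real p - 1) / real p ^ (k + 1) \<and>
         (isoclinic G H \<and> extraspecial p H \<and> order H = p ^ (k + 1) \<longrightarrow>
            comm_degree G \<nu> = (real p ^ k + real p - 1) / real p ^ (k + 1))"
proof -
  note cg = assms(1) and p = assms(2) and k2 = assms(3) and ord = assms(4) and hm = assms(5)
  have gG: "group G" using cg unfolding compact_group_def by simp
  interpret G: group G by (rule gG)
  have pg: "p > 0" using p prime_gt_0_nat by blast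
  have N: "card (rcosets\<^bsub>G\<^esub> (center G)) = p ^ k" using ord by (simp add: order_def FactGroup_def)
  have fin: "finite (rcosets\<^bsub>G\<^esub> (center G))" using N pg by (intro card_ge_0_finite) simp
  have k1: "k \<ge> 1" using k2 by simp
  have cd: "comm_degree G \<nu> = real (card (CP G)) / (real p ^ k) ^ 2"
    using G.measure_part[OF cg hm fin] N by simp
  have le: "card (CP G) \<le> p ^ k + (p ^ k - 1) * p ^ (k - 1)" using G.CP_le[OF p N] .
  have part1: "comm_degree G \<nu> \<le> (real p ^ k + real p - 1) / real p ^ (k + 1)"
  proof -
    have "comm_degree G \<nu> \<le> real (p ^ k + (p ^ k - 1) * p ^ (k - 1)) / (real p ^ k) ^ 2"
    proof -
      have "real (card (CP G)) \<le> real (p ^ k + (p ^ k - 1) * p ^ (k - 1))"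
        using le by (simp only: of_nat_le_iff)
      then show ?thesis unfolding cd by (rule divide_right_mono) simp
    qed
    then show ?thesis using arith_id[OF pg k1] by simp
  qed
  have part2: "comm_degree G \<nu> = (real p ^ k + real p - 1) / real p ^ (k + 1)"
    if iso: "isoclinic G H" and ex: "extraspecial p H" and oH: "order H = p ^ (k + 1)"
  proof -
    have gH: "group H" and finH: "finite (carrier H)" and Zd: "center H = derived H (carrier H)"
      and cZ: "card (center H) = p" using ex unfolding extraspecial_def by auto
    interpret H: group H by (rule gH)
    have t: "card (CP G) = card (CP H) \<and> card (rcosets\<^bsub>G\<^esub> (center G)) = card (rcosets\<^bsub>H\<^esub> (center H))"
      by (rule iso_CP[OF gG gH iso])
    have NH: "card (rcosets\<^bsub>H\<^esub> (center H)) = p ^ k" using t N by simp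
    have "card (CP H) = p ^ k + (p ^ k - 1) * p ^ (k - 1)"
      by (rule H.CP_eq[OF p NH H.SC_lower[OF finH p Zd cZ oH k1]])
    then have "card (CP G) = p ^ k + (p ^ k - 1) * p ^ (k - 1)" using t by simp
    then show ?thesis unfolding cd using arith_id[OF pg k1] by simp
  qed
  show ?thesis using part1 part2 by blast
qed

end
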